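(* Let $\Omega\subset\mathbb{R}^N$ be a bounded open set, let $D_n\subset\Omega$ ($n\in\mathbb{N}$) and $D\subset\Omega$ be open sets, and let $1<p<+\infty$. If $W^{1,p}(D_n)$ converges to $W^{1,p}(D)$ in the sense of Mosco as $n\to\infty$, then $|D_n\,\Delta\, D|\to0$ and in particular $|D_n|\to|D|$ as $n\to\infty$.
   Context: $|\cdot|$ is Lebesgue measure and $\Delta$ the symmetric difference. For open $E\subset\Omega$, $W^{1,p}(E)$ is viewed as a closed subspace of $L^p(\Omega;\mathbb{R}^{N+1})$ via $u\mapsto(u,\nabla u)$ extended by $0$ outside $E$. Closed subspaces $A_n$ of a reflexive Banach space $X$ converge in the sense of Mosco to a closed subspace $A$ if (M1) whenever $x_k\in A_{n_k}$ along a subsequence and $x_k\rightharpoonup x$ weakly, then $x\in A$; and (M2) every $x\in A$ is the strong limit of some $x_n\in A_n$. *)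

theory Defs
  imports "HOL-Analysis.Analysis"
begin

fun Ck_fun :: "nat \<Rightarrow> ('a::euclidean_space \<Rightarrow> real) set" where
  "Ck_fun 0 = {f. continuous_on UNIV f}"
| "Ck_fun (Suc k) = {f. (\<forall>x. f differentiable (at x)) \<and>
      (\<forall>b\<in>Basis. (\<lambda>x. frechet_derivative f (at x) b) \<in> Ck_fun k)}"

definition smooth_fun :: "('a::euclidean_space \<Rightarrow> real) \<Rightarrow> bool" where
  "smooth_fun f \<longleftrightarrow> (\<forall>k. f \<in> Ck_fun k)"

definition test_funs :: "'a::euclidean_space set \<Rightarrow> ('a \<Rightarrow> real) set" where
  "test_funs E = {\<phi>. smooth_fun \<phi> \<and> compact (closure {x. \<phi> x \<noteq> 0})
                      \<and> closure {x. \<phi> x \<noteq> 0} \<subseteq> E}"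

definition Lp :: "real \<Rightarrow> 'a::euclidean_space set \<Rightarrow> ('a \<Rightarrow> 'b::euclidean_space) set" where
  "Lp p E = {f. f \<in> borel_measurable (lebesgue_on E) \<and>
                integrable (lebesgue_on E) (\<lambda>x. norm (f x) powr p)}"

definition weak_gradient :: "'a::euclidean_space set \<Rightarrow> ('a \<Rightarrow> real) \<Rightarrow> ('a \<Rightarrow> 'a) \<Rightarrow> bool" where
  "weak_gradient E u g \<longleftrightarrow>
     (\<forall>\<phi>\<in>test_funs E. \<forall>b\<in>Basis.
        integral\<^sup>L (lebesgue_on E) (\<lambda>x. u x * frechet_derivative \<phi> (at x) b)
        = - integral\<^sup>L (lebesgue_on E) (\<lambda>x. (g x \<bullet> b) * \<phi> x))"

definition W1p :: "real \<Rightarrow> 'a::euclidean_space set \<Rightarrow> (('a \<Rightarrow> real) \<times> ('a \<Rightarrow> 'a)) set" where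
  "W1p p E = {(u, g). u \<in> Lp p E \<and> g \<in> Lp p E \<and> weak_gradient E u g}"

text \<open>W^{1,p}(E) viewed inside L^p(Omega; R^{N+1}) via u \<mapsto> (u, grad u) extended by 0
  outside E; as a set of representatives (closed under a.e. equality).\<close>
definition W1p_emb :: "real \<Rightarrow> 'a::euclidean_space set \<Rightarrow> 'a set \<Rightarrow> ('a \<Rightarrow> real \<times> 'a) set" where
  "W1p_emb p \<Omega> E = {F \<in> Lp p \<Omega>. \<exists>u g. (u, g) \<in> W1p p E \<and>
       (AE x in lebesgue_on \<Omega>. F x = (if x \<in> E then (u x, g x) else 0))}"

text \<open>Weak convergence in L^p (1 < p < infinity), via the duality (L^p)' = L^{p'}.\<close>
definition Lp_weak_conv :: "real \<Rightarrow> 'a::euclidean_space set \<Rightarrow> (nat \<Rightarrow> 'a \<Rightarrow> 'b::euclidean_space) \<Rightarrow> ('a \<Rightarrow> 'b) \<Rightarrow> bool" where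
  "Lp_weak_conv p \<Omega> f F \<longleftrightarrow> (\<forall>k. f k \<in> Lp p \<Omega>) \<and> F \<in> Lp p \<Omega> \<and>
     (\<forall>h\<in>Lp (p / (p - 1)) \<Omega>.
        (\<lambda>k. integral\<^sup>L (lebesgue_on \<Omega>) (\<lambda>x. f k x \<bullet> h x))
          \<longlonglongrightarrow> integral\<^sup>L (lebesgue_on \<Omega>) (\<lambda>x. F x \<bullet> h x))"

definition Lp_strong_conv :: "real \<Rightarrow> 'a::euclidean_space set \<Rightarrow> (nat \<Rightarrow> 'a \<Rightarrow> 'b::euclidean_space) \<Rightarrow> ('a \<Rightarrow> 'b) \<Rightarrow> bool" where
  "Lp_strong_conv p \<Omega> f F \<longleftrightarrow> (\<forall>k. f k \<in> Lp p \<Omega>) \<and> F \<in> Lp p \<Omega> \<and>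
     (\<lambda>k. integral\<^sup>L (lebesgue_on \<Omega>) (\<lambda>x. norm (f k x - F x) powr p)) \<longlonglongrightarrow> 0"

definition Mosco_conv :: "real \<Rightarrow> 'a::euclidean_space set \<Rightarrow> (nat \<Rightarrow> ('a \<Rightarrow> 'b::euclidean_space) set) \<Rightarrow> ('a \<Rightarrow> 'b) set \<Rightarrow> bool" where
  "Mosco_conv p \<Omega> A B \<longleftrightarrow>
     (\<forall>r x F. strict_mono r \<and> (\<forall>k. x k \<in> A (r k)) \<and> Lp_weak_conv p \<Omega> x F \<longrightarrow> F \<in> B) \<and>
     (\<forall>F\<in>B. \<exists>x. (\<forall>n. x n \<in> A n) \<and> Lp_strong_conv p \<Omega> x F)"

end

theory Submission
  imports Defs "HOL-Library.Diagonal_Subsequence"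
begin



lemma test_fun_props:
  assumes "\<phi> \<in> test_funs E"
  shows "\<And>x. \<phi> differentiable (at x)"
    and "\<And>b. b \<in> Basis \<Longrightarrow> continuous_on UNIV (\<lambda>x. frechet_derivative \<phi> (at x) b)"
    and "compact (closure {x. \<phi> x \<noteq> 0})" and "closure {x. \<phi> x \<noteq> 0} \<subseteq> E"
proof -
  have "\<phi> \<in> Ck_fun (Suc 0)" using assms unfolding test_funs_def smooth_fun_def by blast
  then show "\<And>x. \<phi> differentiable (at x)"
    and "\<And>b. b \<in> Basis \<Longrightarrow> continuous_on UNIV (\<lambda>x. frechet_derivative \<phi> (at x) b)"
    by auto
  show "compact (closure {x. \<phi> x \<noteq> 0})" "closure {x. \<phi> x \<noteq> 0} \<subseteq> E"
    using assms unfolding test_funs_def by auto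
qed

lemma deriv_integral_zero_lborel:
  fixes \<phi> :: "'a::euclidean_space \<Rightarrow> real"
  assumes \<phi>: "\<phi> \<in> test_funs E" and b: "b \<in> Basis"
  shows "integral\<^sup>L lborel (\<lambda>x. frechet_derivative \<phi> (at x) b) = 0"
proof -
  define \<psi> where "\<psi> x = frechet_derivative \<phi> (at x) b" for x
  define K where "K = closure {x. \<phi> x \<noteq> 0}"
  have Kc: "compact K" unfolding K_def using test_fun_props(3)[OF \<phi>] .
  have diff: "(\<phi> has_derivative frechet_derivative \<phi> (at x)) (at x)" for x
    using frechet_derivative_works[THEN iffD1, OF test_fun_props(1)[OF \<phi>]] .
  have \<psi>c: "continuous_on UNIV \<psi>" unfolding \<psi>_def using test_fun_props(2)[OF \<phi> b] .
  have \<phi>c: "continuous_on UNIV \<phi>"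
  proof (rule differentiable_imp_continuous_on)
    show "\<phi> differentiable_on UNIV" unfolding differentiable_on_def
      using test_fun_props(1)[OF \<phi>] by simp
  qed
  have \<phi>out: "x \<notin> K \<Longrightarrow> \<phi> x = 0" for x unfolding K_def using closure_subset[of "{x. \<phi> x \<noteq> 0}"] by auto
  have \<psi>out: "x \<notin> K \<Longrightarrow> \<psi> x = 0" for x
  proof -
    assume x: "x \<notin> K"
    have "((\<lambda>_. 0::real) has_derivative (\<lambda>_. 0)) (at x)" by simp
    then have "(\<phi> has_derivative (\<lambda>_. 0)) (at x)"
      by (rule has_derivative_transform_within_open[where s="- K"]) (use x \<phi>out Kc in \<open>auto simp: compact_imp_closed open_Compl\<close>)
    then have "(\<lambda>_. 0) = frechet_derivative \<phi> (at x)" by (rule frechet_derivative_at)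
    then show ?thesis unfolding \<psi>_def by (metis)
  qed
  obtain C where C: "\<And>x. \<bar>\<psi> x\<bar> \<le> C"
  proof -
    have "bounded (\<psi> ` K)" using Kc \<psi>c
      by (meson compact_continuous_image compact_imp_bounded continuous_on_subset subset_UNIV)
    then obtain a where a: "\<And>y. y \<in> \<psi> ` K \<Longrightarrow> norm y \<le> a" by (auto simp: bounded_iff)
    have "\<bar>\<psi> x\<bar> \<le> max a 0" for x
      using a[of "\<psi> x"] \<psi>out[of x] by (cases "x \<in> K") auto
    then show ?thesis using that by blast
  qed
  define K' where "K' = {y + z |y z. y \<in> K \<and> z \<in> cball (0::'a) 1}"
  have K'c: "compact K'" unfolding K'_def using Kc by (intro compact_sums) auto
  define t where "t n = inverse (real (Suc n))" for n
  have t0: "t \<longlonglongrightarrow> 0" unfolding t_def by (rule LIMSEQ_inverse_real_of_nat)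
  have tpos: "0 < t n" "t n \<le> 1" for n unfolding t_def by (auto simp: field_simps)
  define q where "q n x = (\<phi> (x + t n *\<^sub>R b) - \<phi> x) / t n" for n x
  have line: "((\<lambda>s. \<phi> (x + s *\<^sub>R b)) has_real_derivative \<psi> (x + s *\<^sub>R b)) (at s)" for x s
  proof -
    have l: "((\<lambda>s. x + s *\<^sub>R b) has_derivative (\<lambda>s. s *\<^sub>R b)) (at s)"
      by (auto intro!: derivative_eq_intros)
    have "((\<lambda>s. \<phi> (x + s *\<^sub>R b)) has_derivative (\<lambda>h. frechet_derivative \<phi> (at (x + s *\<^sub>R b)) (h *\<^sub>R b))) (at s)"
      using has_derivative_compose[OF l diff] by simp
    moreover have "(\<lambda>h. frechet_derivative \<phi> (at (x + s *\<^sub>R b)) (h *\<^sub>R b)) = (*) (\<psi> (x + s *\<^sub>R b))"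
      using has_derivative_linear[OF diff[of "x + s *\<^sub>R b"]] unfolding \<psi>_def
      by (auto simp: fun_eq_iff linear_scale)
    ultimately show ?thesis by (simp add: has_field_derivative_def)
  qed
  have \<phi>int: "integrable lborel \<phi>"
  proof -
    have "integrable lborel (\<lambda>x. indicator K x *\<^sub>R \<phi> x)"
      using Kc \<phi>c by (intro borel_integrable_compact) (auto intro: continuous_on_subset)
    moreover have "(\<lambda>x. indicator K x *\<^sub>R \<phi> x) = \<phi>" using \<phi>out by (auto simp: fun_eq_iff split: split_indicator)
    ultimately show ?thesis by simp
  qed
  have \<phi>m: "\<phi> \<in> borel_measurable borel" using \<phi>c by (rule borel_measurable_continuous_onI)
  have shift: "integrable lborel (\<lambda>x. \<phi> (c + x)) \<and> (\<integral>x. \<phi> (c + x) \<partial>lborel) = (\<integral>x. \<phi> x \<partial>lborel)" for c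
  proof -
    have pm: "(+) c \<in> lborel \<rightarrow>\<^sub>M borel" by simp
    show ?thesis
      using integrable_distr_eq[OF pm \<phi>m] integral_distr[OF pm \<phi>m] \<phi>int
      by (simp add: lborel_distr_plus)
  qed
  have qint0: "integral\<^sup>L lborel (q n) = 0" for n
  proof -
    have "integral\<^sup>L lborel (q n) = ((\<integral>x. \<phi> (t n *\<^sub>R b + x) \<partial>lborel) - (\<integral>x. \<phi> x \<partial>lborel)) / t n"
      unfolding q_def using shift[of "t n *\<^sub>R b"] \<phi>int by (simp add: add.commute)
    then show ?thesis using shift[of "t n *\<^sub>R b"] by simp
  qed
  have qlim: "(\<lambda>n. q n x) \<longlonglongrightarrow> \<psi> x" for x
  proof -
    have "((\<lambda>h. (\<phi> (x + (0 + h) *\<^sub>R b) - \<phi> (x + 0 *\<^sub>R b)) / h) \<longlongrightarrow> \<psi> (x + 0 *\<^sub>R b)) (at 0)"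
      using line[of x 0] unfolding DERIV_def .
    then have "((\<lambda>h. (\<phi> (x + h *\<^sub>R b) - \<phi> x) / h) \<longlongrightarrow> \<psi> x) (at 0)" by simp
    moreover have "\<forall>\<^sub>F n in sequentially. t n \<noteq> 0" using tpos by (simp add: less_imp_neq[symmetric])
    ultimately show ?thesis unfolding q_def using tendsto_compose_eventually[OF _ t0] by blast
  qed
  have qbd: "\<bar>q n x\<bar> \<le> C * indicator K' x" for n x
  proof (cases "x \<in> K'")
    case True
    obtain z where "0 < z" "z < t n" and z: "\<phi> (x + t n *\<^sub>R b) - \<phi> (x + 0 *\<^sub>R b) = (t n - 0) * \<psi> (x + z *\<^sub>R b)"
      using MVT2[of 0 "t n" "\<lambda>s. \<phi> (x + s *\<^sub>R b)" "\<lambda>s. \<psi> (x + s *\<^sub>R b)"] tpos[of n] line by blast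
    then have "q n x = \<psi> (x + z *\<^sub>R b)" unfolding q_def using tpos[of n] by simp
    then show ?thesis using C True by simp
  next
    case False
    have "x \<notin> K" using False unfolding K'_def by (auto intro!: exI[of _ x] exI[of _ 0])
    moreover have "x + t n *\<^sub>R b \<notin> K"
    proof
      assume "x + t n *\<^sub>R b \<in> K"
      moreover have "- (t n *\<^sub>R b) \<in> cball 0 1" using b tpos[of n] by simp
      moreover have "x = (x + t n *\<^sub>R b) + (- (t n *\<^sub>R b))" by simp
      ultimately have "x \<in> K'" unfolding K'_def by blast
      then show False using False by simp
    qed
    ultimately show ?thesis using False \<phi>out unfolding q_def by simp
  qed
  have "(\<lambda>n. integral\<^sup>L lborel (q n)) \<longlonglongrightarrow> integral\<^sup>L lborel \<psi>"
  proof (rule integral_dominated_convergence[where w="\<lambda>x. C * indicator K' x"])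
    show "\<psi> \<in> borel_measurable lborel" using \<psi>c by (simp add: borel_measurable_continuous_onI)
    show "q n \<in> borel_measurable lborel" for n unfolding q_def using \<phi>m by measurable
    have "emeasure lborel K' < \<infinity>" using K'c by (intro emeasure_bounded_finite compact_imp_bounded)
    then show "integrable lborel (\<lambda>x. C * indicator K' x)"
      using K'c by (intro integrable_mult_right integrable_real_indicator) (auto simp: compact_imp_closed borel_closed)
    show "AE x in lborel. (\<lambda>n. q n x) \<longlonglongrightarrow> \<psi> x" using qlim by simp
    show "\<And>n. AE x in lborel. norm (q n x) \<le> C * indicator K' x" using qbd by simp
  qed
  then have "(\<lambda>n. 0) \<longlonglongrightarrow> integral\<^sup>L lborel \<psi>" using qint0 by simp
  then show ?thesis unfolding \<psi>_def using LIMSEQ_unique tendsto_const by (metis (no_types))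
qed


lemma test_deriv_out:
  assumes \<phi>: "\<phi> \<in> test_funs E" and x: "x \<notin> closure {x. \<phi> x \<noteq> 0}"
  shows "frechet_derivative \<phi> (at x) b = 0"
proof -
  define K where "K = closure {x. \<phi> x \<noteq> 0}"
  have Kc: "closed K" unfolding K_def by simp
  have \<phi>out: "y \<notin> K \<Longrightarrow> \<phi> y = 0" for y unfolding K_def using closure_subset[of "{x. \<phi> x \<noteq> 0}"] by auto
  have "((\<lambda>_. 0::real) has_derivative (\<lambda>_. 0)) (at x)" by simp
  then have "(\<phi> has_derivative (\<lambda>_. 0)) (at x)"
  proof (rule has_derivative_transform_within_open[where s="- K"])
    show "open (- K)" using Kc by (simp add: open_Compl)
    show "x \<in> - K" using x unfolding K_def by simp
    show "\<And>y. y \<in> - K \<Longrightarrow> 0 = \<phi> y" using \<phi>out by simp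
  qed
  then have "(\<lambda>_. 0) = frechet_derivative \<phi> (at x)" by (rule frechet_derivative_at)
  then show ?thesis by (metis)
qed

lemma deriv_integral_zero_on:
  fixes \<phi> :: "'a::euclidean_space \<Rightarrow> real"
  assumes \<phi>: "\<phi> \<in> test_funs E" and b: "b \<in> Basis" and E: "E \<in> sets lebesgue"
  shows "integral\<^sup>L (lebesgue_on E) (\<lambda>x. frechet_derivative \<phi> (at x) b) = 0"
proof -
  define \<psi> where "\<psi> x = frechet_derivative \<phi> (at x) b" for x
  have \<psi>m: "\<psi> \<in> borel_measurable borel" unfolding \<psi>_def
    using test_fun_props(2)[OF \<phi> b] by (rule borel_measurable_continuous_onI)
  have "integral\<^sup>L (lebesgue_on E) \<psi> = integral\<^sup>L lebesgue (\<lambda>x. indicator E x *\<^sub>R \<psi> x)"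
    by (rule integral_restrict_space) (simp add: E)
  also have "(\<lambda>x. indicator E x *\<^sub>R \<psi> x) = \<psi>"
  proof
    fix x show "indicator E x *\<^sub>R \<psi> x = \<psi> x"
    proof (cases "x \<in> E")
      case False
      then have "x \<notin> closure {x. \<phi> x \<noteq> 0}" using test_fun_props(4)[OF \<phi>] by blast
      then show ?thesis unfolding \<psi>_def using test_deriv_out[OF \<phi>] by simp
    qed simp
  qed
  also have "integral\<^sup>L lebesgue \<psi> = integral\<^sup>L lborel \<psi>"
    using \<psi>m by (intro integral_completion) simp
  also have "\<dots> = 0" unfolding \<psi>_def by (rule deriv_integral_zero_lborel[OF \<phi> b])
  finally show ?thesis unfolding \<psi>_def .
qed

lemma ind_W1p:
  fixes \<Omega> E :: "'a::euclidean_space set"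
  assumes E: "open E" "E \<subseteq> \<Omega>" and Om: "\<Omega> \<in> lmeasurable" and p: "p > 0"
  shows "(\<lambda>x. indicator E x *\<^sub>R (1::real, 0::'a)) \<in> W1p_emb p \<Omega> E"
proof -
  let ?F = "\<lambda>x. indicator E x *\<^sub>R (1::real, 0::'a)"
  have Es: "E \<in> sets lebesgue" using E by simp
  have Em: "E \<in> lmeasurable" using fmeasurableI2[OF Om E(2)] E by simp
  have Os: "\<Omega> \<in> sets lebesgue" using Om by auto
  have fmO: "finite_measure (lebesgue_on \<Omega>)" using Om by (rule finite_measure_lebesgue_on)
  have fmE: "finite_measure (lebesgue_on E)" using Em by (rule finite_measure_lebesgue_on)
  have Fm: "?F \<in> borel_measurable (lebesgue_on \<Omega>)"
    by (intro measurable_restrict_space1) (use Es in measurable)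
  have nF: "norm (?F x) powr p = indicator E x" for x
    using p by (auto split: split_indicator)
  have EO: "E \<in> sets (lebesgue_on \<Omega>)" using E Es Os by (simp add: sets_restrict_space_iff)
  have "integrable (lebesgue_on \<Omega>) (indicator E :: 'a \<Rightarrow> real)"
    using EO fmO by (intro integrable_real_indicator) (auto simp: finite_measure.emeasure_finite less_top[symmetric])
  then have FL: "?F \<in> Lp p \<Omega>" unfolding Lp_def using Fm nF by simp
  have uL: "(\<lambda>x. 1::real) \<in> Lp p E" unfolding Lp_def
    using finite_measure.integrable_const[OF fmE] by simp
  have gL: "(\<lambda>x. 0::'a) \<in> Lp p E" unfolding Lp_def using p by simp
  have wg: "weak_gradient E (\<lambda>x. 1) (\<lambda>x. 0)"
    unfolding weak_gradient_def using deriv_integral_zero_on[OF _ _ Es] by simp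
  have "(\<lambda>x. 1::real, \<lambda>x. 0::'a) \<in> W1p p E" unfolding W1p_def using uL gL wg by simp
  moreover have "AE x in lebesgue_on \<Omega>. ?F x = (if x \<in> E then ((\<lambda>x. 1::real) x, (\<lambda>x. 0::'a) x) else 0)"
    by (intro AE_I2) (simp add: zero_prod_def split: split_indicator)
  ultimately show ?thesis unfolding W1p_emb_def using FL by blast
qed




lemma bounded_mult_integrable:
  fixes g h :: "'a \<Rightarrow> real"
  assumes "g \<in> borel_measurable M" "\<And>x. \<bar>g x\<bar> \<le> 1" "integrable M h"
  shows "integrable M (\<lambda>x. g x * h x)"
proof (rule Bochner_Integration.integrable_bound[OF assms(3)])
  show "(\<lambda>x. g x * h x) \<in> borel_measurable M"
    using assms borel_measurable_integrable by measurable
  show "AE x in M. norm (g x * h x) \<le> norm (h x)"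
    using assms(2) by (auto simp: abs_mult intro!: mult_left_le_one_le)
qed

lemma bounded_mult_est:
  fixes g u v :: "'a \<Rightarrow> real"
  assumes "g \<in> borel_measurable M" "\<And>x. \<bar>g x\<bar> \<le> 1" "integrable M u" "integrable M v"
  shows "\<bar>(\<integral>x. g x * u x \<partial>M) - (\<integral>x. g x * v x \<partial>M)\<bar> \<le> (\<integral>x. \<bar>u x - v x\<bar> \<partial>M)"
proof -
  have iu: "integrable M (\<lambda>x. g x * u x)" and iv: "integrable M (\<lambda>x. g x * v x)"
    using bounded_mult_integrable assms by blast+
  have id: "integrable M (\<lambda>x. g x * (u x - v x))"
    using bounded_mult_integrable[OF assms(1,2)] assms(3,4) by blast
  have "(\<integral>x. g x * u x \<partial>M) - (\<integral>x. g x * v x \<partial>M) = (\<integral>x. g x * (u x - v x) \<partial>M)"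
    using iu iv by (simp add: right_diff_distrib)
  also have "\<bar>\<dots>\<bar> \<le> (\<integral>x. \<bar>g x * (u x - v x)\<bar> \<partial>M)"
    using integral_norm_bound[of M "\<lambda>x. g x * (u x - v x)"] by simp
  also have "\<dots> \<le> (\<integral>x. \<bar>u x - v x\<bar> \<partial>M)"
    using integrable_abs[OF id] assms(2-4)
    by (intro integral_mono) (auto simp: abs_mult intro!: mult_left_le_one_le)
  finally show ?thesis .
qed

locale wc_setup =
  fixes M :: "'a measure" and f :: "nat \<Rightarrow> 'a \<Rightarrow> real"
  assumes fm: "finite_measure M"
    and fmeas: "\<And>k. f k \<in> borel_measurable M"
    and f0: "\<And>k x. 0 \<le> f k x" and f1: "\<And>k x. f k x \<le> 1"
begin

sublocale finite_measure M by (rule fm)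

definition c :: "nat \<Rightarrow> 'a set \<Rightarrow> real" where
  "c k A = (\<integral>x. f k x * indicator A x \<partial>M)"

lemma ind_int: "A \<in> sets M \<Longrightarrow> integrable M (indicator A :: 'a \<Rightarrow> real)"
  by (intro integrable_real_indicator) (auto simp: less_top[symmetric])

lemma fA_int: "A \<in> sets M \<Longrightarrow> integrable M (\<lambda>x. f k x * indicator A x)"
  using bounded_mult_integrable[OF fmeas, of k] ind_int f0 f1
  by (metis abs_of_nonneg)

lemma c_nonneg: "0 \<le> c k A"
  unfolding c_def using f0 by (intro integral_nonneg_AE) auto

lemma c_le: "A \<in> sets M \<Longrightarrow> c k A \<le> measure M A"
proof -
  assume A: "A \<in> sets M"
  have "c k A \<le> (\<integral>x. indicator A x \<partial>M)"
    unfolding c_def using A f1 fA_int ind_int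
    by (intro integral_mono) (auto simp: mult_left_le_one_le split: split_indicator)
  also have "\<dots> = measure M A" using A fm by (simp add: finite_measure.emeasure_finite)
  finally show ?thesis .
qed

lemma c_add: "A \<in> sets M \<Longrightarrow> B \<in> sets M \<Longrightarrow> A \<inter> B = {} \<Longrightarrow> c k (A \<union> B) = c k A + c k B"
proof -
  assume A: "A \<in> sets M" and B: "B \<in> sets M" and d: "A \<inter> B = {}"
  have "(\<lambda>x. f k x * indicator (A \<union> B) x) = (\<lambda>x. f k x * indicator A x + f k x * indicator B x)"
    using d by (auto simp: indicator_def fun_eq_iff)
  then show ?thesis unfolding c_def using fA_int[OF A] fA_int[OF B] by simp
qed

lemma c_diff: "A \<in> sets M \<Longrightarrow> B \<in> sets M \<Longrightarrow> \<bar>c k A - c k B\<bar> \<le> measure M (A - B) + measure M (B - A)"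
proof -
  assume A: "A \<in> sets M" and B: "B \<in> sets M"
  have 1: "c k A = c k (A \<inter> B) + c k (A - B)"
    using c_add[of "A \<inter> B" "A - B" k] A B by (metis Int_Diff_disjoint Int_Diff_Un sets.Diff sets.Int)
  have 2: "c k B = c k (A \<inter> B) + c k (B - A)"
    using c_add[of "A \<inter> B" "B - A" k] A B by (metis Diff_Diff_Int Diff_disjoint Int_commute Un_Diff_Int inf_sup_aci(1) sets.Diff sets.Int Int_Diff_Un)
  show ?thesis using 1 2 c_nonneg[of k "A - B"] c_nonneg[of k "B - A"] c_le[of "A - B" k] c_le[of "B - A" k] A B
    by auto
qed

end

locale wc_setup2 = wc_setup +
  fixes G :: "'a set set"
  assumes Gc: "countable G" and Gs: "G \<subseteq> sets M"
    and Gapprox: "\<And>A e. A \<in> sets M \<Longrightarrow> e > 0 \<Longrightarrow> \<exists>B\<in>G. measure M (A - B) + measure M (B - A) < e"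
begin

lemma G_ne: "G \<noteq> {}"
  using Gapprox[of "{}" 1] by auto

definition g :: "nat \<Rightarrow> 'a set" where "g j = from_nat_into G j"

lemma g_in: "g j \<in> G" unfolding g_def using G_ne by (rule from_nat_into)

lemma bolzano: "A \<in> sets M \<Longrightarrow> \<exists>r. strict_mono r \<and> convergent (\<lambda>k. c ((s::nat\<Rightarrow>nat) (r k)) A)"
proof -
  assume A: "A \<in> sets M"
  obtain r where r: "strict_mono r" "monoseq (\<lambda>n. c (s (r n)) A)"
    using seq_monosub[of "\<lambda>n. c (s n) A"] by blast
  have "Bseq (\<lambda>n. c (s (r n)) A)"
    using c_nonneg c_le[OF A] by (intro BseqI'[where K="measure M A"]) auto
  then show ?thesis using r Bseq_monoseq_convergent by blast
qed

interpretation D: subseqs "\<lambda>j s. convergent (\<lambda>k. c (s k) (g j))"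
proof
  fix j and s :: "nat \<Rightarrow> nat" assume "strict_mono s"
  obtain r where "strict_mono r" "convergent (\<lambda>k. c (s (r k)) (g j))"
    using bolzano[of "g j" s] g_in Gs by blast
  then show "\<exists>r'. strict_mono r' \<and> convergent (\<lambda>k. c ((s \<circ> r') k) (g j))" by auto
qed

definition sq where "sq = D.diagseq"

lemma sq_mono: "strict_mono sq" unfolding sq_def by (rule D.subseq_diagseq)

lemma conv_g: "convergent (\<lambda>k. c (sq k) (g j))"
proof -
  have "convergent (\<lambda>k. c ((D.diagseq \<circ> (+) (Suc j)) k) (g j))"
  proof (rule D.diagseq_holds)
    fix r s n assume "strict_mono (r::nat\<Rightarrow>nat)" "convergent (\<lambda>k. c (s k) (g n))"
    then show "convergent (\<lambda>k. c ((s \<circ> r) k) (g n))"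
      unfolding convergent_def comp_def using LIMSEQ_subseq_LIMSEQ[of "\<lambda>k. c (s k) (g n)"]
      by (auto simp: comp_def)
  qed
  then have "convergent (\<lambda>k. c (sq (k + Suc j)) (g j))"
    by (simp add: sq_def add.commute)
  then show ?thesis by (rule convergent_ignore_initial_segment[THEN iffD1])
qed

lemma conv_all: "A \<in> sets M \<Longrightarrow> convergent (\<lambda>k. c (sq k) A)"
proof -
  assume A: "A \<in> sets M"
  have "Cauchy (\<lambda>k. c (sq k) A)"
  proof (rule metric_CauchyI)
    fix e :: real assume e: "0 < e"
    obtain B where B: "B \<in> G" "measure M (A - B) + measure M (B - A) < e/3"
      using Gapprox[OF A, of "e/3"] e by auto
    then obtain j where j: "B = g j" unfolding g_def
      by (metis Gc from_nat_into_surj)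
    have "Cauchy (\<lambda>k. c (sq k) B)" using conv_g j Cauchy_convergent_iff by blast
    then obtain N where N: "\<forall>m\<ge>N. \<forall>n\<ge>N. dist (c (sq m) B) (c (sq n) B) < e/3"
      using e metric_CauchyD[of "\<lambda>k. c (sq k) B" "e/3"] by auto
    have Bs: "B \<in> sets M" using B Gs by auto
    show "\<exists>N. \<forall>m\<ge>N. \<forall>n\<ge>N. dist (c (sq m) A) (c (sq n) A) < e"
    proof (intro exI allI impI)
      fix m n assume "N \<le> m" "N \<le> n"
      then have "\<bar>c (sq m) B - c (sq n) B\<bar> < e/3" using N by (auto simp: dist_real_def)
      moreover have "\<bar>c (sq m) A - c (sq m) B\<bar> < e/3" "\<bar>c (sq n) A - c (sq n) B\<bar> < e/3"
        using c_diff[OF A Bs] B(2) by (meson le_less_trans)+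
      ultimately show "dist (c (sq m) A) (c (sq n) A) < e"
        unfolding dist_real_def by linarith
    qed
  qed
  then show ?thesis using Cauchy_convergent_iff by blast
qed

definition \<nu> where "\<nu> A = lim (\<lambda>k. c (sq k) A)"

lemma \<nu>_lim: "A \<in> sets M \<Longrightarrow> (\<lambda>k. c (sq k) A) \<longlonglongrightarrow> \<nu> A"
  unfolding \<nu>_def using conv_all convergent_LIMSEQ_iff by blast

lemma \<nu>_nonneg: "A \<in> sets M \<Longrightarrow> 0 \<le> \<nu> A"
  using \<nu>_lim c_nonneg by (meson LIMSEQ_le_const)

lemma \<nu>_le: "A \<in> sets M \<Longrightarrow> \<nu> A \<le> measure M A"
  using \<nu>_lim c_le by (meson LIMSEQ_le_const2)

lemma \<nu>_add: "A \<in> sets M \<Longrightarrow> B \<in> sets M \<Longrightarrow> A \<inter> B = {} \<Longrightarrow> \<nu> (A \<union> B) = \<nu> A + \<nu> B"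
proof -
  assume A: "A \<in> sets M" and B: "B \<in> sets M" and d: "A \<inter> B = {}"
  have "(\<lambda>k. c (sq k) (A \<union> B)) \<longlonglongrightarrow> \<nu> A + \<nu> B"
    using tendsto_add[OF \<nu>_lim[OF A] \<nu>_lim[OF B]] c_add[OF A B d] by simp
  then show ?thesis using \<nu>_lim[of "A \<union> B"] A B LIMSEQ_unique by blast
qed


lemma \<nu>_empty: "\<nu> {} = 0"
proof -
  have "(\<lambda>k. c (sq k) {}) \<longlonglongrightarrow> 0" by (simp add: c_def)
  then show ?thesis using \<nu>_lim[of "{}"] LIMSEQ_unique by blast
qed

definition \<mu> where "\<mu> A = ennreal (\<nu> A)"

lemma \<mu>_pos: "positive (sets M) \<mu>"
  unfolding positive_def \<mu>_def by (simp add: \<nu>_empty)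

lemma \<mu>_ca: "countably_additive (sets M) \<mu>"
proof (rule sets.empty_continuous_imp_countably_additive[OF \<mu>_pos])
  show "Measure_Space.additive (sets M) \<mu>"
    unfolding additive_def \<mu>_def using \<nu>_add \<nu>_nonneg by (simp add: ennreal_plus)
  show "\<forall>A\<in>sets M. \<mu> A \<noteq> \<infinity>" by (simp add: \<mu>_def)
  fix A :: "nat \<Rightarrow> 'a set"
  assume A: "range A \<subseteq> sets M" "antimono_on UNIV A" "\<Inter> (range A) = {}"
  have "(\<lambda>i. measure M (A i)) \<longlonglongrightarrow> measure M (\<Inter> (range A))"
    using finite_Lim_measure_decseq A by blast
  then have m0: "(\<lambda>i. measure M (A i)) \<longlonglongrightarrow> 0" using A by simp
  have "(\<lambda>i. \<nu> (A i)) \<longlonglongrightarrow> 0"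
    by (rule real_tendsto_sandwich[OF _ _ tendsto_const m0]) (use A \<nu>_nonneg \<nu>_le in auto)
  then have "(\<lambda>i. ennreal (\<nu> (A i))) \<longlonglongrightarrow> ennreal 0" by (rule tendsto_ennrealI)
  then show "(\<lambda>i. \<mu> (A i)) \<longlonglongrightarrow> 0" by (simp add: \<mu>_def)
qed

definition N where "N = measure_of (space M) (sets M) \<mu>"

lemma emN: "A \<in> sets M \<Longrightarrow> emeasure N A = ennreal (\<nu> A)"
  unfolding N_def using emeasure_measure_of_sigma[OF sets.sigma_algebra_axioms \<mu>_pos \<mu>_ca]
  by (simp add: \<mu>_def)

lemma setsN: "sets N = sets M" unfolding N_def by (rule sets.sets_measure_of_eq)

lemma acN: "absolutely_continuous M N"
  unfolding absolutely_continuous_def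
proof
  fix A assume "A \<in> null_sets M"
  then have A: "A \<in> sets M" "measure M A = 0" by (auto simp: null_sets_def measure_def)
  then have "\<nu> A = 0" using \<nu>_le[of A] \<nu>_nonneg[of A] by simp
  then show "A \<in> null_sets N" using A emN setsN by (auto simp: null_sets_def)
qed

definition th' where "th' = (SOME f. f \<in> borel_measurable M \<and> density M f = N)"

lemma th'_props: "th' \<in> borel_measurable M" "density M th' = N"
proof -
  have "\<exists>f. f \<in> borel_measurable M \<and> density M f = N"
    using Radon_Nikodym[OF acN setsN] by blast
  then have "th' \<in> borel_measurable M \<and> density M th' = N"
    unfolding th'_def by (rule someI_ex)
  then show "th' \<in> borel_measurable M" "density M th' = N" by auto
qed

lemma th'_int: "A \<in> sets M \<Longrightarrow> (\<integral>\<^sup>+x. th' x * indicator A x \<partial>M) = ennreal (\<nu> A)"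
  using emeasure_density[OF th'_props(1), of A] th'_props(2) emN by simp

lemma th'_le1: "AE x in M. th' x \<le> 1"
proof -
  define S where "S = {x\<in>space M. 1 < th' x}"
  have S: "S \<in> sets M" unfolding S_def using th'_props(1) by measurable
  have I1: "(\<integral>\<^sup>+x. th' x * indicator S x \<partial>M) \<le> (\<integral>\<^sup>+x. indicator S x \<partial>M)"
    using th'_int[OF S] \<nu>_le[OF S] S by (simp add: emeasure_eq_measure)
  have I2: "(\<integral>\<^sup>+x. indicator S x \<partial>M) \<le> (\<integral>\<^sup>+x. th' x * indicator S x \<partial>M)"
    by (intro nn_integral_mono) (auto simp: S_def split: split_indicator)
  have fin: "(\<integral>\<^sup>+x. indicator S x \<partial>M) \<noteq> \<infinity>" using S by simp
  have "(\<integral>\<^sup>+x. th' x * indicator S x - indicator S x \<partial>M) = 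
     (\<integral>\<^sup>+x. th' x * indicator S x \<partial>M) - (\<integral>\<^sup>+x. indicator S x \<partial>M)"
    using S th'_props(1) fin
    by (intro nn_integral_diff) (auto simp: S_def split: split_indicator)
  also have "\<dots> = 0" using antisym[OF I1 I2] fin by (simp add: ennreal_diff_self)
  finally have "AE x in M. th' x * indicator S x - indicator S x = 0"
    using S th'_props(1) by (subst nn_integral_0_iff_AE[symmetric]) auto
  then show ?thesis
  proof (rule AE_mp, intro AE_I2 impI)
    fix x assume x: "x \<in> space M" and e: "th' x * indicator S x - indicator S x = (0::ennreal)"
    show "th' x \<le> 1"
    proof (cases "x \<in> S")
      case True
      then have "th' x \<le> 1" using e ennreal_minus_eq_0 by (auto split: split_indicator)
      then show ?thesis .
    next
      case False then show ?thesis using x by (auto simp: S_def)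
    qed
  qed
qed

definition th where "th x = enn2real (min (th' x) 1)"

lemma th_meas: "th \<in> borel_measurable M" unfolding th_def using th'_props(1) by measurable

lemma th_bounds: "0 \<le> th x" "th x \<le> 1"
  unfolding th_def using enn2real_mono[of "min (th' x) 1" 1] by auto

lemma th_ae: "AE x in M. ennreal (th x) = th' x"
  using th'_le1
proof (rule AE_mp, intro AE_I2 impI)
  fix x assume "th' x \<le> 1"
  moreover then have "th' x \<noteq> top" using order.strict_trans1 top.not_eq_extremum by (metis ennreal_less_top ennreal_1)
  ultimately show "ennreal (th x) = th' x" unfolding th_def by (simp add: min_def ennreal_enn2real_if)
qed

lemma th_int: "A \<in> sets M \<Longrightarrow> (\<integral>x. th x * indicator A x \<partial>M) = \<nu> A"
proof -
  assume A: "A \<in> sets M"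
  have int: "integrable M (\<lambda>x. th x * indicator A x)"
    using bounded_mult_integrable[OF th_meas _ ind_int[OF A]] th_bounds by (metis abs_of_nonneg)
  have "ennreal (\<integral>x. th x * indicator A x \<partial>M) = (\<integral>\<^sup>+x. ennreal (th x * indicator A x) \<partial>M)"
    using int th_bounds by (intro nn_integral_eq_integral[symmetric]) auto
  also have "\<dots> = (\<integral>\<^sup>+x. th' x * indicator A x \<partial>M)"
    using th_ae by (intro nn_integral_cong_AE) (auto simp: ennreal_mult' split: split_indicator elim!: AE_mp)
  also have "\<dots> = ennreal (\<nu> A)" by (rule th'_int[OF A])
  finally show ?thesis using \<nu>_nonneg[OF A] th_bounds
    by (subst (asm) ennreal_inj) (auto intro!: integral_nonneg_AE)
qed


lemma f_abs: "\<bar>f k x\<bar> \<le> 1" using f0 f1 by (metis abs_of_nonneg)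
lemma th_abs: "\<bar>th x\<bar> \<le> 1" using th_bounds by (metis abs_of_nonneg)

lemma weak_lim:
  assumes h: "integrable M h"
  shows "(\<lambda>k. \<integral>x. f (sq k) x * h x \<partial>M) \<longlonglongrightarrow> (\<integral>x. th x * h x \<partial>M)"
  using h
proof (induct rule: integrable_induct)
  case (base A c0)
  have "(\<lambda>k. c (sq k) A * c0) \<longlonglongrightarrow> \<nu> A * c0" using \<nu>_lim[OF base(1)] by (intro tendsto_mult_right)
  moreover have "\<And>k. (\<integral>x. f (sq k) x * (indicator A x *\<^sub>R c0) \<partial>M) = c (sq k) A * c0"
  proof -
    fix k
    have "(\<integral>x. f (sq k) x * (indicator A x *\<^sub>R c0) \<partial>M) = (\<integral>x. (f (sq k) x * indicator A x) * c0 \<partial>M)"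
      by (simp add: mult.assoc)
    then show "(\<integral>x. f (sq k) x * (indicator A x *\<^sub>R c0) \<partial>M) = c (sq k) A * c0"
      unfolding c_def by simp
  qed
  moreover have "(\<integral>x. th x * (indicator A x *\<^sub>R c0) \<partial>M) = \<nu> A * c0"
  proof -
    have "(\<integral>x. th x * (indicator A x *\<^sub>R c0) \<partial>M) = (\<integral>x. (th x * indicator A x) * c0 \<partial>M)"
      by (simp add: mult.assoc)
    then show ?thesis using th_int[OF base(1)] by simp
  qed
  ultimately show ?case by simp
next
  case (add u v)
  have "\<And>k. (\<integral>x. f (sq k) x * (u x + v x) \<partial>M) = (\<integral>x. f (sq k) x * u x \<partial>M) + (\<integral>x. f (sq k) x * v x \<partial>M)"
    using bounded_mult_integrable[OF fmeas f_abs] add by (simp add: distrib_left)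
  moreover have "(\<integral>x. th x * (u x + v x) \<partial>M) = (\<integral>x. th x * u x \<partial>M) + (\<integral>x. th x * v x \<partial>M)"
    using bounded_mult_integrable[OF th_meas th_abs] add by (simp add: distrib_left)
  ultimately show ?case using tendsto_add[OF add(2) add(4)] by simp
next
  case (lim h s)
  define \<delta> where "\<delta> i = (\<integral>x. \<bar>h x - s i x\<bar> \<partial>M)" for i
  have "(\<lambda>i. \<integral>x. \<bar>h x - s i x\<bar> \<partial>M) \<longlonglongrightarrow> (\<integral>x. 0 \<partial>M)"
  proof (rule integral_dominated_convergence[where w="\<lambda>x. 3 * \<bar>h x\<bar>"])
    show "(\<lambda>x. 0::real) \<in> borel_measurable M" by simp
    show "\<And>i. (\<lambda>x. \<bar>h x - s i x\<bar>) \<in> borel_measurable M"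
      using lim by (auto intro!: borel_measurable_abs borel_measurable_diff borel_measurable_integrable)
    show "integrable M (\<lambda>x. 3 * \<bar>h x\<bar>)" using lim by auto
    show "AE x in M. (\<lambda>i. \<bar>h x - s i x\<bar>) \<longlonglongrightarrow> 0"
    proof (rule AE_I2)
      fix x assume "x \<in> space M"
      then have "(\<lambda>i. h x - s i x) \<longlonglongrightarrow> h x - h x" using lim by (intro tendsto_diff) auto
      then have "(\<lambda>i. \<bar>h x - s i x\<bar>) \<longlonglongrightarrow> \<bar>0\<bar>" by (intro tendsto_rabs) simp
      then show "(\<lambda>i. \<bar>h x - s i x\<bar>) \<longlonglongrightarrow> 0" by simp
    qed
    show "\<And>i. AE x in M. norm \<bar>h x - s i x\<bar> \<le> 3 * \<bar>h x\<bar>"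
    proof (intro AE_I2)
      fix i x assume "x \<in> space M"
      then have "\<bar>s i x\<bar> \<le> 2 * \<bar>h x\<bar>" using lim(4) by force
      then show "norm \<bar>h x - s i x\<bar> \<le> 3 * \<bar>h x\<bar>" by simp
    qed
  qed
  then have d0: "\<delta> \<longlonglongrightarrow> 0" unfolding \<delta>_def by simp
  have e1: "\<bar>(\<integral>x. f (sq k) x * h x \<partial>M) - (\<integral>x. f (sq k) x * s i x \<partial>M)\<bar> \<le> \<delta> i" for k i
    unfolding \<delta>_def using bounded_mult_est[OF fmeas f_abs] lim by blast
  have e2: "\<bar>(\<integral>x. th x * h x \<partial>M) - (\<integral>x. th x * s i x \<partial>M)\<bar> \<le> \<delta> i" for i
    unfolding \<delta>_def using bounded_mult_est[OF th_meas th_abs] lim by blast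
  show ?case
  proof (rule LIMSEQ_I)
    fix r :: real assume r: "0 < r"
    obtain i where i: "\<delta> i < r/3"
    proof -
      obtain n where "\<forall>m\<ge>n. norm (\<delta> m - 0) < r/3" using LIMSEQ_D[OF d0, of "r/3"] r by auto
      then show ?thesis using that[of n] by auto
    qed
    obtain N where N: "\<forall>k\<ge>N. norm ((\<integral>x. f (sq k) x * s i x \<partial>M) - (\<integral>x. th x * s i x \<partial>M)) < r/3"
      using LIMSEQ_D[OF lim(2)[of i], of "r/3"] r by auto
    show "\<exists>no. \<forall>n\<ge>no. norm ((\<integral>x. f (sq n) x * h x \<partial>M) - (\<integral>x. th x * h x \<partial>M)) < r"
    proof (intro exI allI impI)
      fix n assume "N \<le> n"
      then have "\<bar>(\<integral>x. f (sq n) x * s i x \<partial>M) - (\<integral>x. th x * s i x \<partial>M)\<bar> < r/3" using N by auto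
      then show "norm ((\<integral>x. f (sq n) x * h x \<partial>M) - (\<integral>x. th x * h x \<partial>M)) < r"
        using e1[of n i] e2[of i] i unfolding real_norm_def by linarith
    qed
  qed
qed

end

theorem weak_compactness_01:
  fixes f :: "nat \<Rightarrow> 'a \<Rightarrow> real"
  assumes "finite_measure M" "\<And>k. f k \<in> borel_measurable M" "\<And>k x. 0 \<le> f k x" "\<And>k x. f k x \<le> 1"
    and "countable G" "G \<subseteq> sets M"
    and "\<And>A e. A \<in> sets M \<Longrightarrow> e > 0 \<Longrightarrow> \<exists>B\<in>G. measure M (A - B) + measure M (B - A) < e"
  shows "\<exists>s th. strict_mono s \<and> th \<in> borel_measurable M \<and> (\<forall>x. 0 \<le> th x \<and> th x \<le> 1) \<and>
     (\<forall>h. integrable M h \<longrightarrow> (\<lambda>k. \<integral>x. f (s k) x * h x \<partial>M) \<longlonglongrightarrow> (\<integral>x. th x * h x \<partial>M))"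
proof -
  interpret wc_setup2 M f G
    by (intro wc_setup2.intro wc_setup.intro wc_setup2_axioms.intro assms)
  have "strict_mono sq \<and> th \<in> borel_measurable M \<and> (\<forall>x. 0 \<le> th x \<and> th x \<le> 1) \<and>
     (\<forall>h. integrable M h \<longrightarrow> (\<lambda>k. \<integral>x. f (sq k) x * h x \<partial>M) \<longlonglongrightarrow> (\<integral>x. th x * h x \<partial>M))"
    using sq_mono th_meas th_bounds weak_lim by simp
  then show ?thesis by (intro exI)
qed




lemma lebesgue_on_G:
  fixes \<Omega> :: "'a::euclidean_space set"
  assumes Om: "\<Omega> \<in> lmeasurable"
  shows "\<exists>G. countable G \<and> G \<subseteq> sets (lebesgue_on \<Omega>) \<and>
    (\<forall>A e. A \<in> sets (lebesgue_on \<Omega>) \<longrightarrow> e > 0 \<longrightarrow>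
       (\<exists>B\<in>G. measure (lebesgue_on \<Omega>) (A - B) + measure (lebesgue_on \<Omega>) (B - A) < e))"
proof -
  let ?M = "lebesgue_on \<Omega>"
  have fm: "finite_measure ?M" using Om by (rule finite_measure_lebesgue_on)
  have OmS: "\<Omega> \<in> sets lebesgue" using Om by auto
  have setsM: "X \<in> sets ?M \<longleftrightarrow> X \<subseteq> \<Omega> \<and> X \<in> sets lebesgue" for X
    using OmS by (simp add: sets_restrict_space_iff)
  obtain Bs :: "'a set set" where Bs: "countable Bs" "\<And>C. C \<in> Bs \<Longrightarrow> open C"
     "\<And>S. open S \<Longrightarrow> \<exists>U. U \<subseteq> Bs \<and> S = \<Union>U"
    using univ_second_countable by blast
  define G where "G = (\<lambda>F. \<Union>F \<inter> \<Omega>) ` {F. finite F \<and> F \<subseteq> Bs}"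
  have "countable G" unfolding G_def using Bs(1) by (intro countable_image countable_Collect_finite_subset)
  moreover have "G \<subseteq> sets ?M"
  proof
    fix X assume "X \<in> G"
    then obtain F where F: "F \<subseteq> Bs" "X = \<Union>F \<inter> \<Omega>" unfolding G_def by auto
    have "open (\<Union>F)" using F Bs(2) by auto
    then show "X \<in> sets ?M" using F OmS setsM by auto
  qed
  moreover have "\<exists>B\<in>G. measure ?M (A - B) + measure ?M (B - A) < e"
    if A: "A \<in> sets ?M" and e: "e > 0" for A e
  proof -
    have A': "A \<subseteq> \<Omega>" "A \<in> sets lebesgue" using A setsM by auto
    obtain T where T: "open T" "A \<subseteq> T" "T - A \<in> lmeasurable" "emeasure lebesgue (T - A) < ennreal (e/2)"
      using sets_lebesgue_outer_open[OF A'(2), of "e/2"] e by auto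
    have mTA: "measure lebesgue (T - A) < e/2"
      using T(3,4) e by (simp add: emeasure_eq_measure2 ennreal_less_iff)
    obtain U where U: "U \<subseteq> Bs" "T = \<Union>U" using Bs(3) T(1) by blast
    show ?thesis
    proof (cases "U = {}")
      case True
      then have "A = {}" using U T by auto
      moreover have "{} \<in> G" unfolding G_def by (auto intro!: image_eqI[where x="{}"])
      ultimately show ?thesis using e by (intro bexI[of _ "{}"]) auto
    next
      case False
      have cU: "countable U" using U Bs(1) countable_subset by blast
      define u where "u = from_nat_into U"
      have ru: "range u = U" unfolding u_def using False cU by (rule range_from_nat_into)
      define V where "V n = \<Union>(u ` {..<n}) \<inter> \<Omega>" for n
      have Vs: "V n \<in> sets ?M" for n
      proof -
        have "open (\<Union>(u ` {..<n}))" using ru U Bs(2) by auto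
        then show ?thesis unfolding V_def using OmS setsM by auto
      qed
      have "incseq V" unfolding V_def incseq_def by fastforce
      moreover have UV: "(\<Union>n. V n) = T \<inter> \<Omega>"
        unfolding V_def U(2) ru[symmetric] by auto
      ultimately have lim: "(\<lambda>n. measure ?M (V n)) \<longlonglongrightarrow> measure ?M (T \<inter> \<Omega>)"
        using finite_measure.finite_Lim_measure_incseq[OF fm, of V] Vs by auto
      obtain n where n: "\<bar>measure ?M (V n) - measure ?M (T \<inter> \<Omega>)\<bar> < e/2"
        using LIMSEQ_D[OF lim, of "e/2"] e by auto
      have TO: "T \<inter> \<Omega> \<in> sets ?M" using T(1) OmS setsM by auto
      have VT: "V n \<subseteq> T \<inter> \<Omega>" using UV by blast
      have "V n \<in> G" unfolding G_def V_def
        using ru U by (intro image_eqI[where x="u ` {..<n}"]) auto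
      moreover have "measure ?M (A - V n) \<le> measure ?M (T \<inter> \<Omega> - V n)"
        using T A' TO Vs by (intro finite_measure.finite_measure_mono[OF fm]) auto
      moreover have "measure ?M (T \<inter> \<Omega> - V n) = measure ?M (T \<inter> \<Omega>) - measure ?M (V n)"
        using finite_measure.finite_measure_Diff[OF fm TO Vs VT] .
      moreover have "measure ?M (V n - A) \<le> measure ?M (T \<inter> \<Omega> - A)"
        using T A' TO A VT by (intro finite_measure.finite_measure_mono[OF fm]) auto
      moreover have "measure ?M (T \<inter> \<Omega> - A) = measure lebesgue (T \<inter> \<Omega> - A)"
        using OmS by (intro measure_restrict_space) auto
      moreover have "measure lebesgue (T \<inter> \<Omega> - A) \<le> measure lebesgue (T - A)"
        using T(1,3) A' OmS by (intro measure_mono_fmeasurable) (auto intro!: sets.Diff sets.Int borel_open)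
      ultimately have "measure ?M (A - V n) + measure ?M (V n - A) < e" using n mTA by linarith
      then show ?thesis using \<open>V n \<in> G\<close> by blast
    qed
  qed
  ultimately show ?thesis by blast
qed




lemma powr_sum_bound:
  fixes a b p :: real
  assumes "0 \<le> a" "0 \<le> b" "0 < p"
  shows "(a + b) powr p \<le> 2 powr p * (a powr p + b powr p)"
proof -
  have "(a + b) powr p \<le> (2 * max a b) powr p"
    using assms by (intro powr_mono2) auto
  also have "\<dots> = 2 powr p * max a b powr p" using assms by (simp add: powr_mult)
  also have "max a b powr p \<le> a powr p + b powr p"
    by (cases "a \<le> b") (auto simp: max_def)
  then have "2 powr p * max a b powr p \<le> 2 powr p * (a powr p + b powr p)"
    by (intro mult_left_mono) auto
  finally show ?thesis .
qed

lemma Lp_diff_integrable: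
  fixes f g :: "'a::euclidean_space \<Rightarrow> 'b::euclidean_space"
  assumes f: "f \<in> Lp p \<Omega>" and g: "g \<in> Lp p \<Omega>" and p: "p > 0"
  shows "integrable (lebesgue_on \<Omega>) (\<lambda>x. norm (f x - g x) powr p)"
proof (rule Bochner_Integration.integrable_bound)
  show "integrable (lebesgue_on \<Omega>) (\<lambda>x. 2 powr p * (norm (f x) powr p + norm (g x) powr p))"
    using f g unfolding Lp_def by auto
  have [measurable]: "f \<in> borel_measurable (lebesgue_on \<Omega>)" "g \<in> borel_measurable (lebesgue_on \<Omega>)"
    using f g unfolding Lp_def by auto
  show "(\<lambda>x. norm (f x - g x) powr p) \<in> borel_measurable (lebesgue_on \<Omega>)"
    by measurable
  show "AE x in lebesgue_on \<Omega>. norm (norm (f x - g x) powr p) \<le> norm (2 powr p * (norm (f x) powr p + norm (g x) powr p))"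
  proof (intro AE_I2)
    fix x
    have "norm (f x - g x) powr p \<le> (norm (f x) + norm (g x)) powr p"
      using p by (intro powr_mono2) (auto simp: norm_triangle_ineq4)
    also have "\<dots> \<le> 2 powr p * (norm (f x) powr p + norm (g x) powr p)"
      using p by (intro powr_sum_bound) auto
    finally show "norm (norm (f x - g x) powr p) \<le> norm (2 powr p * (norm (f x) powr p + norm (g x) powr p))"
      by simp
  qed
qed

lemma Lp_fst_integrable:
  fixes h :: "'a::euclidean_space \<Rightarrow> real \<times> 'a"
  assumes h: "h \<in> Lp q \<Omega>" and q: "q \<ge> 1" and Om: "\<Omega> \<in> lmeasurable"
  shows "integrable (lebesgue_on \<Omega>) (\<lambda>x. fst (h x))"
proof (rule Bochner_Integration.integrable_bound)
  have fm: "finite_measure (lebesgue_on \<Omega>)" using Om by (rule finite_measure_lebesgue_on)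
  show "integrable (lebesgue_on \<Omega>) (\<lambda>x. 1 + norm (h x) powr q)"
    using h finite_measure.integrable_const[OF fm] unfolding Lp_def by (intro Bochner_Integration.integrable_add) auto
  have [measurable]: "h \<in> borel_measurable (lebesgue_on \<Omega>)"
    using h unfolding Lp_def by auto
  have "(\<lambda>x. h x \<bullet> (1, 0)) \<in> borel_measurable (lebesgue_on \<Omega>)"
    by measurable
  moreover have "(\<lambda>x. h x \<bullet> (1, 0)) = (\<lambda>x. fst (h x))" by (simp add: inner_Pair_0)
  ultimately show "(\<lambda>x. fst (h x)) \<in> borel_measurable (lebesgue_on \<Omega>)" by simp
  show "AE x in lebesgue_on \<Omega>. norm (fst (h x)) \<le> norm (1 + norm (h x) powr q)"
  proof (intro AE_I2)
    fix x
    have "norm (fst (h x)) \<le> norm (h x)"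
      by (metis norm_fst_le prod.collapse)
    also have "norm (h x) \<le> 1 + norm (h x) powr q"
    proof (cases "norm (h x) \<le> 1")
      case True then show ?thesis by (simp add: add_increasing2)
    next
      case False
      then have "norm (h x) = norm (h x) powr 1" by simp
      also have "\<dots> \<le> norm (h x) powr q" using False q by (intro powr_mono) auto
      finally show ?thesis by simp
    qed
    finally show "norm (fst (h x)) \<le> norm (1 + norm (h x) powr q)" by simp
  qed
qed

lemma bounded_Lp:
  fixes th :: "'a::euclidean_space \<Rightarrow> real"
  assumes m: "th \<in> borel_measurable (lebesgue_on \<Omega>)" and b: "\<And>x. \<bar>th x\<bar> \<le> 1"
    and Om: "\<Omega> \<in> lmeasurable" and p: "p > 0"
  shows "(\<lambda>x. (th x, 0::'a)) \<in> Lp p \<Omega>"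
proof -
  note [measurable] = m
  have fm: "finite_measure (lebesgue_on \<Omega>)" using Om by (rule finite_measure_lebesgue_on)
  have "integrable (lebesgue_on \<Omega>) (\<lambda>x. norm (th x, 0::'a) powr p)"
  proof (rule finite_measure.integrable_const_bound[OF fm, where B=1])
    show "AE x in lebesgue_on \<Omega>. norm (norm (th x, 0::'a) powr p) \<le> 1"
      using b p by (intro AE_I2) (simp add: powr_le1)
    show "(\<lambda>x. norm (th x, 0::'a) powr p) \<in> borel_measurable (lebesgue_on \<Omega>)"
      by measurable
  qed
  moreover have "(\<lambda>x. (th x, 0::'a)) \<in> borel_measurable (lebesgue_on \<Omega>)" by measurable
  ultimately show ?thesis unfolding Lp_def by simp
qed


lemma meas_diff_bound:
  fixes A B :: "'a::euclidean_space set"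
  assumes "A \<in> lmeasurable" "B \<in> lmeasurable"
  shows "measure lebesgue A \<le> measure lebesgue B + measure lebesgue (A - B)"
proof -
  have "measure lebesgue A \<le> measure lebesgue (B \<union> (A - B))"
    using assms by (intro measure_mono_fmeasurable) auto
  also have "\<dots> \<le> measure lebesgue B + measure lebesgue (A - B)"
    using assms by (intro measure_Un_le) auto
  finally show ?thesis .
qed

theorem corollary2p14:
  fixes \<Omega> D :: "'a::euclidean_space set" and Dn :: "nat \<Rightarrow> 'a set" and p :: real
  assumes "bounded \<Omega>" and "open \<Omega>"
    and "\<And>n. open (Dn n)" and "\<And>n. Dn n \<subseteq> \<Omega>"
    and "open D" and "D \<subseteq> \<Omega>"
    and "1 < p"
    and "Mosco_conv p \<Omega> (\<lambda>n. W1p_emb p \<Omega> (Dn n)) (W1p_emb p \<Omega> D)"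
  shows "(\<lambda>n. measure lebesgue ((Dn n - D) \<union> (D - Dn n))) \<longlonglongrightarrow> 0 \<and>
         (\<lambda>n. measure lebesgue (Dn n)) \<longlonglongrightarrow> measure lebesgue D"
proof -
  note M = assms(8)[unfolded Mosco_conv_def]
  have Oms: "\<Omega> \<in> sets lebesgue" using assms(2) by simp
  have Om: "\<Omega> \<in> lmeasurable" using assms(1) Oms by (rule bounded_set_imp_lmeasurable)
  have p0: "p > 0" using assms(7) by simp
  have fm: "finite_measure (lebesgue_on \<Omega>)" using Om by (rule finite_measure_lebesgue_on)
  have Dns: "Dn n \<in> sets lebesgue" for n using assms(3) by simp
  have Ds: "D \<in> sets lebesgue" using assms(5) by simp
  have Dnl: "Dn n \<in> lmeasurable" for n using fmeasurableI2[OF Om assms(4)] Dns by simp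
  have Dl: "D \<in> lmeasurable" using fmeasurableI2[OF Om assms(6)] Ds by simp
  have spO: "space (lebesgue_on \<Omega>) = \<Omega>" by simp
  have setsO: "X \<in> sets (lebesgue_on \<Omega>) \<longleftrightarrow> X \<subseteq> \<Omega> \<and> X \<in> sets lebesgue" for X
    using Oms by (simp add: sets_restrict_space_iff)
  have intind: "(\<integral>y. indicator X y \<partial>lebesgue_on \<Omega>) = measure lebesgue X" if "X \<subseteq> \<Omega>" "X \<in> sets lebesgue" for X
  proof -
    have "(\<integral>y. indicator X y \<partial>lebesgue_on \<Omega>) = measure (lebesgue_on \<Omega>) (X \<inter> \<Omega>)"
      by (simp add: integral_indicator)
    also have "X \<inter> \<Omega> = X" using that by auto
    also have "measure (lebesgue_on \<Omega>) X = measure lebesgue X"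
      using that Oms by (intro measure_restrict_space) auto
    finally show ?thesis .
  qed
  have indint: "integrable (lebesgue_on \<Omega>) (indicator X :: 'a \<Rightarrow> real)" if "X \<subseteq> \<Omega>" "X \<in> sets lebesgue" for X
    using that setsO fm by (intro integrable_real_indicator) (auto simp: finite_measure.emeasure_finite less_top[symmetric])
  define F where "F E = (\<lambda>x::'a. indicator E x *\<^sub>R (1::real, 0::'a))" for E
  have FW: "F E \<in> W1p_emb p \<Omega> E" if "open E" "E \<subseteq> \<Omega>" for E
    unfolding F_def using ind_W1p that Om p0 by blast

  have P1: "(\<lambda>n. measure lebesgue (D - Dn n)) \<longlonglongrightarrow> 0"
  proof -
    obtain x where x: "\<And>n. x n \<in> W1p_emb p \<Omega> (Dn n)" "Lp_strong_conv p \<Omega> x (F D)"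
      using M FW[OF assms(5,6)] by blast
    have FL: "F D \<in> Lp p \<Omega>" using x(2) unfolding Lp_strong_conv_def by blast
    have bound: "measure lebesgue (D - Dn n) \<le> (\<integral>y. norm (x n y - F D y) powr p \<partial>lebesgue_on \<Omega>)" for n
    proof -
      from x(1)[of n] obtain u g where xL: "x n \<in> Lp p \<Omega>"
        and ae: "AE y in lebesgue_on \<Omega>. x n y = (if y \<in> Dn n then (u y, g y) else 0)"
        unfolding W1p_emb_def by blast
      have "measure lebesgue (D - Dn n) = (\<integral>y. indicator (D - Dn n) y \<partial>lebesgue_on \<Omega>)"
        using assms(6) Ds Dns by (intro intind[symmetric]) auto
      also have "\<dots> \<le> (\<integral>y. norm (x n y - F D y) powr p \<partial>lebesgue_on \<Omega>)"
      proof (rule integral_mono_AE)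
        show "integrable (lebesgue_on \<Omega>) (indicator (D - Dn n) :: 'a \<Rightarrow> real)"
          using assms(6) Ds Dns by (intro indint) auto
        show "integrable (lebesgue_on \<Omega>) (\<lambda>y. norm (x n y - F D y) powr p)"
          by (rule Lp_diff_integrable[OF xL FL p0])
        show "AE y in lebesgue_on \<Omega>. indicator (D - Dn n) y \<le> norm (x n y - F D y) powr p"
          using ae
        proof (rule AE_mp, intro AE_I2 impI)
          fix y assume e: "x n y = (if y \<in> Dn n then (u y, g y) else 0)"
          show "indicator (D - Dn n) y \<le> norm (x n y - F D y) powr p"
          proof (cases "y \<in> D - Dn n")
            case True
            then have "x n y - F D y = - (1, 0)" using e by (simp add: F_def)
            then show ?thesis using True by simp
          qed simp
        qed
      qed
      finally show ?thesis .
    qed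
    have lim: "(\<lambda>n. \<integral>y. norm (x n y - F D y) powr p \<partial>lebesgue_on \<Omega>) \<longlonglongrightarrow> 0"
      using x(2) unfolding Lp_strong_conv_def by blast
    show ?thesis
      by (rule real_tendsto_sandwich[OF _ _ tendsto_const lim]) (use bound in auto)
  qed

  have P2: "(\<lambda>n. measure lebesgue (Dn n - D)) \<longlonglongrightarrow> 0"
  proof (rule ccontr)
    assume nc: "\<not> (\<lambda>n. measure lebesgue (Dn n - D)) \<longlonglongrightarrow> 0"
    have "\<exists>\<epsilon>>0. \<forall>N. \<exists>n\<ge>N. \<epsilon> \<le> measure lebesgue (Dn n - D)"
    proof (rule ccontr)
      assume "\<not> (\<exists>\<epsilon>>0. \<forall>N. \<exists>n\<ge>N. \<epsilon> \<le> measure lebesgue (Dn n - D))"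
      then have h: "\<And>\<epsilon>. \<epsilon> > 0 \<Longrightarrow> \<exists>N. \<forall>n\<ge>N. measure lebesgue (Dn n - D) < \<epsilon>"
        by (meson not_le)
      have "(\<lambda>n. measure lebesgue (Dn n - D)) \<longlonglongrightarrow> 0"
      proof (rule LIMSEQ_I)
        fix r :: real assume "0 < r"
        then obtain N where "\<forall>n\<ge>N. measure lebesgue (Dn n - D) < r" using h by blast
        then show "\<exists>no. \<forall>n\<ge>no. norm (measure lebesgue (Dn n - D) - 0) < r" by auto
      qed
      then show False using nc by simp
    qed
    then obtain \<epsilon> where \<epsilon>: "\<epsilon> > 0" "\<And>N. \<exists>n\<ge>N. \<epsilon> \<le> measure lebesgue (Dn n - D)" by blast
    define S where "S = {n. \<epsilon> \<le> measure lebesgue (Dn n - D)}"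
    have Sinf: "infinite S" unfolding S_def infinite_nat_iff_unbounded_le using \<epsilon>(2) by auto
    define r where "r = enumerate S"
    have r: "strict_mono r" "\<And>k. \<epsilon> \<le> measure lebesgue (Dn (r k) - D)"
      unfolding r_def using strict_mono_enumerate[OF Sinf] enumerate_in_set[OF Sinf] by (auto simp: S_def)
    obtain G where G: "countable G" "G \<subseteq> sets (lebesgue_on \<Omega>)"
      "\<And>A e. A \<in> sets (lebesgue_on \<Omega>) \<Longrightarrow> e > 0 \<Longrightarrow>
         \<exists>B\<in>G. measure (lebesgue_on \<Omega>) (A - B) + measure (lebesgue_on \<Omega>) (B - A) < e"
      using lebesgue_on_G[OF Om] by blast
    define f where "f k = (indicator (Dn (r k)) :: 'a \<Rightarrow> real)" for k
    have fmeas: "f k \<in> borel_measurable (lebesgue_on \<Omega>)" for k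
      unfolding f_def using Dns by (intro measurable_restrict_space1 borel_measurable_indicator) auto
    have f01: "\<And>k x. 0 \<le> f k x" "\<And>k x. f k x \<le> 1" unfolding f_def
      by (simp_all add: indicator_def)
    have ex: "\<exists>s th. strict_mono s \<and> th \<in> borel_measurable (lebesgue_on \<Omega>) \<and> (\<forall>x. 0 \<le> th x \<and> th x \<le> 1) \<and>
       (\<forall>h. integrable (lebesgue_on \<Omega>) h \<longrightarrow>
          (\<lambda>k. \<integral>x. f (s k) x * h x \<partial>lebesgue_on \<Omega>) \<longlonglongrightarrow> (\<integral>x. th x * h x \<partial>lebesgue_on \<Omega>))"
      by (rule weak_compactness_01[OF fm fmeas f01 G])
    then obtain s th where st: "strict_mono s \<and> th \<in> borel_measurable (lebesgue_on \<Omega>) \<and> (\<forall>x. 0 \<le> th x \<and> th x \<le> 1) \<and>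
       (\<forall>h. integrable (lebesgue_on \<Omega>) h \<longrightarrow>
          (\<lambda>k. \<integral>x. f (s k) x * h x \<partial>lebesgue_on \<Omega>) \<longlonglongrightarrow> (\<integral>x. th x * h x \<partial>lebesgue_on \<Omega>))"
      by (elim exE) (rule that)
    have s: "strict_mono s" using st by (rule conjunct1)
    have thmeas: "th \<in> borel_measurable (lebesgue_on \<Omega>)" using st by (elim conjE)
    have thb: "\<And>x. 0 \<le> th x \<and> th x \<le> 1" using st by (elim conjE) (rule spec)
    have wl: "\<And>h. integrable (lebesgue_on \<Omega>) h \<Longrightarrow>
          (\<lambda>k. \<integral>x. f (s k) x * h x \<partial>lebesgue_on \<Omega>) \<longlonglongrightarrow> (\<integral>x. th x * h x \<partial>lebesgue_on \<Omega>)"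
      using st by (elim conjE) (erule allE, erule mp)
    define xs where "xs k = F (Dn (r (s k)))" for k
    have xsW: "xs k \<in> W1p_emb p \<Omega> (Dn ((r \<circ> s) k))" for k
      unfolding xs_def using FW assms(3,4) by simp
    have rs: "strict_mono (r \<circ> s)" using r(1) s by (rule strict_mono_o)
    define Th where "Th = (\<lambda>y. (th y, 0::'a))"
    have ThL: "Th \<in> Lp p \<Omega>" unfolding Th_def
      using bounded_Lp[OF thmeas _ Om p0] thb by (metis abs_of_nonneg)
    have q1: "1 \<le> p / (p - 1)" using assms(7) by (simp add: field_simps)
    have wc: "Lp_weak_conv p \<Omega> xs Th"
      unfolding Lp_weak_conv_def
    proof (intro conjI ballI allI)
      show "xs k \<in> Lp p \<Omega>" for k using xsW[of k] unfolding W1p_emb_def by blast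
      show "Th \<in> Lp p \<Omega>" by (rule ThL)
      fix h :: "'a \<Rightarrow> real \<times> 'a" assume h: "h \<in> Lp (p / (p - 1)) \<Omega>"
      have "(\<lambda>k. \<integral>x. f (s k) x * fst (h x) \<partial>lebesgue_on \<Omega>) \<longlonglongrightarrow> (\<integral>x. th x * fst (h x) \<partial>lebesgue_on \<Omega>)"
        by (rule wl[OF Lp_fst_integrable[OF h q1 Om]])
      moreover have "xs k y \<bullet> h y = f (s k) y * fst (h y)" for k y
        unfolding xs_def F_def f_def by (cases "h y") (simp split: split_indicator)
      moreover have "Th y \<bullet> h y = th y * fst (h y)" for y
        unfolding Th_def by (cases "h y") simp
      ultimately show "(\<lambda>k. \<integral>x. xs k x \<bullet> h x \<partial>lebesgue_on \<Omega>) \<longlonglongrightarrow> (\<integral>x. Th x \<bullet> h x \<partial>lebesgue_on \<Omega>)"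
        by simp
    qed
    have M1: "\<And>r x F. strict_mono r \<Longrightarrow> (\<forall>k. x k \<in> W1p_emb p \<Omega> (Dn (r k))) \<Longrightarrow>
        Lp_weak_conv p \<Omega> x F \<Longrightarrow> F \<in> W1p_emb p \<Omega> D"
      using M by blast
    have "Th \<in> W1p_emb p \<Omega> D"
      using M1[OF rs _ wc] xsW by blast
    then obtain u g where ae: "AE y in lebesgue_on \<Omega>. Th y = (if y \<in> D then (u y, g y) else 0)"
      unfolding W1p_emb_def by blast
    have ae0: "AE y in lebesgue_on \<Omega>. th y * indicator (\<Omega> - D) y = 0"
      using ae by (rule AE_mp) (auto simp: Th_def zero_prod_def split: split_indicator)
    have lim0: "(\<lambda>k. \<integral>x. f (s k) x * indicator (\<Omega> - D) x \<partial>lebesgue_on \<Omega>) \<longlonglongrightarrow> 0"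
    proof -
      have "(\<lambda>k. \<integral>x. f (s k) x * indicator (\<Omega> - D) x \<partial>lebesgue_on \<Omega>) \<longlonglongrightarrow> (\<integral>x. th x * indicator (\<Omega> - D) x \<partial>lebesgue_on \<Omega>)"
        using Oms Ds by (intro wl indint) auto
      moreover have "(\<integral>x. th x * indicator (\<Omega> - D) x \<partial>lebesgue_on \<Omega>) = 0"
        using ae0 by (rule integral_eq_zero_AE)
      ultimately show ?thesis by simp
    qed
    have eq: "(\<integral>x. f (s k) x * indicator (\<Omega> - D) x \<partial>lebesgue_on \<Omega>) = measure lebesgue (Dn (r (s k)) - D)" for k
    proof -
      have "(\<lambda>x. f (s k) x * indicator (\<Omega> - D) x) = indicator (Dn (r (s k)) - D)"
        unfolding f_def using assms(4)[of "r (s k)"] by (auto simp: fun_eq_iff split: split_indicator)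
      then show ?thesis using intind[of "Dn (r (s k)) - D"] assms(4) Dns Ds by auto
    qed
    have "\<epsilon> \<le> 0"
      using lim0 by (rule LIMSEQ_le_const) (use eq r(2) in auto)
    then show False using \<epsilon>(1) by simp
  qed

  have sym_le: "measure lebesgue ((Dn n - D) \<union> (D - Dn n)) \<le> measure lebesgue (Dn n - D) + measure lebesgue (D - Dn n)" for n
    using Dns Ds by (intro measure_Un_le) auto
  have S: "(\<lambda>n. measure lebesgue (Dn n - D) + measure lebesgue (D - Dn n)) \<longlonglongrightarrow> 0"
    using tendsto_add[OF P2 P1] by simp
  have C1: "(\<lambda>n. measure lebesgue ((Dn n - D) \<union> (D - Dn n))) \<longlonglongrightarrow> 0"
    by (rule real_tendsto_sandwich[OF _ _ tendsto_const S]) (use sym_le in auto)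
  have "(\<lambda>n. measure lebesgue (Dn n) - measure lebesgue D) \<longlonglongrightarrow> 0"
  proof (rule Lim_null_comparison[OF _ S])
    show "\<forall>\<^sub>F n in sequentially. norm (measure lebesgue (Dn n) - measure lebesgue D) \<le> measure lebesgue (Dn n - D) + measure lebesgue (D - Dn n)"
    proof (intro always_eventually allI)
      fix n
      have "measure lebesgue (Dn n) \<le> measure lebesgue D + measure lebesgue (Dn n - D)"
        using meas_diff_bound[OF Dnl Dl] .
      moreover have "measure lebesgue D \<le> measure lebesgue (Dn n) + measure lebesgue (D - Dn n)"
        using meas_diff_bound[OF Dl Dnl] .
      moreover have "0 \<le> measure lebesgue (Dn n - D)" "0 \<le> measure lebesgue (D - Dn n)" by auto
      ultimately show "norm (measure lebesgue (Dn n) - measure lebesgue D) \<le> measure lebesgue (Dn n - D) + measure lebesgue (D - Dn n)"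
        unfolding real_norm_def abs_le_iff by linarith
    qed
  qed
  then have C2: "(\<lambda>n. measure lebesgue (Dn n)) \<longlonglongrightarrow> measure lebesgue D" by (rule LIM_zero_cancel)
  show ?thesis using C1 C2 by simp
qed


end
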